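(* Let $\mathcal{H}$ be a complex Hilbert space, $H_1,H_2$ closed real linear subspaces with real orthogonal projections $E_1,E_2$, and set $X(E_1,E_2):=E_1+E_2-E_1\vee E_2$. (a) $X(E_1,E_2)$ is a real selfadjoint contraction with $\|X(E_1,E_2)\|=\|E_1E_2\|$. (b) $X(E_1,E_2)=0$ if and only if $E_1\le E_2^{\perp_{\mathbb{R}}}$. (c) If $E_1$ is standard and $E_1\le E_2'$, then $X(E_1,E_2)=0$ if and only if $E_2=0$.
   Context: Real orthogonal projections are real linear idempotents selfadjoint with respect to $\mathrm{Re}\langle\cdot,\cdot\rangle$. $E_1\vee E_2$ is the real orthogonal projection onto the closed real span of $H_1\cup H_2$. $E^{\perp_{\mathbb{R}}}=1-E$ is the projection onto the real orthogonal complement with respect to $\mathrm{Re}\langle\cdot,\cdot\rangle$. $E'=1+iEi$ is the projection onto the symplectic complement $\{\xi:\mathrm{Im}\langle\xi,h\rangle=0\ \forall h\in E\mathcal{H}\}$. $E\le F$ means $E\mathcal{H}\subset F\mathcal{H}$. $E$ (or its range $H$) is standard if $H\cap iH=\{0\}$ and $H+iH$ is dense in $\mathcal{H}$. *)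

theory Defs
  imports "HOL-Analysis.Analysis"
begin

text \<open>A complex Hilbert space is modelled as a real Hilbert space (real inner product
  = Re of the complex inner product) together with the operator J of multiplication
  by the imaginary unit i: a real-linear isometry with J (J x) = - x.\<close>

definition complex_structure :: "('a::real_inner \<Rightarrow> 'a) \<Rightarrow> bool" where
  "complex_structure J \<longleftrightarrow> linear J \<and> (\<forall>x. J (J x) = - x) \<and>
     (\<forall>x y. inner (J x) (J y) = inner x y)"

definition is_rproj :: "('a::real_inner \<Rightarrow> 'a) \<Rightarrow> 'a set \<Rightarrow> bool" where
  "is_rproj P H \<longleftrightarrow> linear P \<and> (\<forall>x. P (P x) = P x) \<and>
     (\<forall>x y. inner (P x) y = inner x (P y)) \<and> range P = H"

definition rjoin :: "('a::real_inner \<Rightarrow> 'a) \<Rightarrow> ('a \<Rightarrow> 'a) \<Rightarrow> ('a \<Rightarrow> 'a)" where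
  "rjoin E1 E2 = (THE P. is_rproj P (closure (span (range E1 \<union> range E2))))"

definition rperp :: "('a::real_vector \<Rightarrow> 'a) \<Rightarrow> ('a \<Rightarrow> 'a)" where
  "rperp E = (\<lambda>x. x - E x)"

text \<open>Symplectic complement projection E' = 1 + i E i.\<close>
definition sprime :: "('a::real_vector \<Rightarrow> 'a) \<Rightarrow> ('a \<Rightarrow> 'a) \<Rightarrow> ('a \<Rightarrow> 'a)" where
  "sprime J E = (\<lambda>x. x + J (E (J x)))"

definition rle :: "('a \<Rightarrow> 'a) \<Rightarrow> ('a \<Rightarrow> 'a) \<Rightarrow> bool" where
  "rle E F \<longleftrightarrow> range E \<subseteq> range F"

definition standard :: "('a::real_normed_vector \<Rightarrow> 'a) \<Rightarrow> 'a set \<Rightarrow> bool" where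
  "standard J H \<longleftrightarrow> H \<inter> J ` H = {0} \<and>
     closure {a + b | a b. a \<in> H \<and> b \<in> J ` H} = UNIV"

definition Xop :: "('a::real_inner \<Rightarrow> 'a) \<Rightarrow> ('a \<Rightarrow> 'a) \<Rightarrow> ('a \<Rightarrow> 'a)" where
  "Xop E1 E2 = (\<lambda>x. E1 x + E2 x - rjoin E1 E2 x)"

end

theory Submission
  imports Defs
begin

lemma inner_eq_allI:
  fixes a b :: "'a::real_inner"
  assumes "\<And>y. inner a y = inner b y"
  shows "a = b"
proof -
  have "inner (a - b) (a - b) = 0" using assms[of "a-b"] by (simp add: inner_diff_left)
  then show ?thesis by simp
qed

lemma subspace_closure_gen:
  fixes S :: "'a::real_normed_vector set"
  assumes "subspace S"
  shows "subspace (closure S)"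
  unfolding subspace_def
proof (intro conjI ballI allI)
  show "0 \<in> closure S" using assms closure_subset subspace_0 by blast
next
  fix x y assume "x \<in> closure S" "y \<in> closure S"
  then obtain f g where "\<forall>n. f n \<in> S" "f \<longlonglongrightarrow> x" "\<forall>n. g n \<in> S" "g \<longlonglongrightarrow> y"
    unfolding closure_sequential by blast
  then show "x + y \<in> closure S" unfolding closure_sequential
    by (intro exI[of _ "\<lambda>n. f n + g n"]) (auto intro: tendsto_add subspace_add[OF assms])
next
  fix c x assume "x \<in> closure S"
  then obtain f where "\<forall>n. f n \<in> S" "f \<longlonglongrightarrow> x"
    unfolding closure_sequential by blast
  then show "c *\<^sub>R x \<in> closure S" unfolding closure_sequential
    by (intro exI[of _ "\<lambda>n. c *\<^sub>R f n"]) (auto intro: tendsto_scaleR subspace_scale[OF assms])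
qed

lemma orth_decomp:
  fixes M :: "'a::{real_inner,complete_space} set"
  assumes cM: "closed M" and sM: "subspace M"
  shows "\<exists>m\<in>M. \<forall>y\<in>M. inner (x - m) y = 0"
proof -
  define D where "D = (\<lambda>m. norm (x - m)) ` M"
  have "0 \<in> M" by (simp add: subspace_0 sM)
  then have Dne: "D \<noteq> {}" unfolding D_def by blast
  have bdd: "bdd_below D" unfolding D_def bdd_below_def by (intro exI[of _ 0]) auto
  define d where "d = Inf D"
  have d0: "0 \<le> d" unfolding d_def using Dne by (intro cInf_greatest) (auto simp: D_def)
  have dle: "d \<le> norm (x - m)" if "m \<in> M" for m
    unfolding d_def using bdd that by (intro cInf_lower) (auto simp: D_def)
  have "\<exists>m\<in>M. norm (x - m) < d + 1 / real (Suc n)" for n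
  proof -
    have "Inf D < d + 1 / real (Suc n)" unfolding d_def by simp
    from cInf_lessD[OF Dne this] show ?thesis unfolding D_def by auto
  qed
  then obtain s where sM': "\<And>n. s n \<in> M" and sd: "\<And>n. norm (x - s n) < d + 1 / real (Suc n)"
    by metis
  have para: "norm (s i - s j)^2 \<le> (4*d+2) * (1 / real (Suc i) + 1 / real (Suc j))" for i j
  proof -
    define u where "u = x - s i"
    define v where "v = x - s j"
    have pl: "norm (u - v)^2 + norm (u + v)^2 = 2 * norm u ^2 + 2 * norm v ^2"
      by (simp add: power2_norm_eq_inner inner_add_left inner_add_right inner_diff_left inner_diff_right inner_commute)
    have "(1/2) *\<^sub>R (s i + s j) \<in> M" using sM sM' by (simp add: subspace_add subspace_scale)
    then have "d \<le> norm (x - (1/2) *\<^sub>R (s i + s j))" by (rule dle)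
    moreover have "u + v = 2 *\<^sub>R (x - (1/2) *\<^sub>R (s i + s j))" unfolding u_def v_def
      by (simp add: algebra_simps scaleR_2)
    ultimately have "2 * d \<le> norm (u + v)" by simp
    then have uv: "4 * d^2 \<le> norm (u+v)^2" using d0
      by (metis (no_types, lifting) mult_2 power2_eq_square power_mono zero_le_double_add_iff_zero_le_single_add four_x_squared)
    define a where "a = 1 / real (Suc i)"
    define b where "b = 1 / real (Suc j)"
    have a0: "0 < a" "a \<le> 1" and b0: "0 < b" "b \<le> 1" unfolding a_def b_def by auto
    have nu: "norm u < d + a" "norm v < d + b" using sd unfolding u_def v_def a_def b_def by auto
    have "norm u ^2 \<le> (d + a)^2" using nu by (intro power_mono) auto
    moreover have "norm v ^2 \<le> (d + b)^2" using nu by (intro power_mono) auto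
    moreover have "(d+a)^2 \<le> d^2 + (2*d+1)*a" using a0 d0
      by (simp add: power2_eq_square algebra_simps mult_left_le)
    moreover have "(d+b)^2 \<le> d^2 + (2*d+1)*b" using b0 d0
      by (simp add: power2_eq_square algebra_simps mult_left_le)
    moreover have "norm (u - v) = norm (s i - s j)" unfolding u_def v_def
      by (metis norm_minus_commute diff_diff_eq2 add_diff_cancel_left' diff_add_cancel diff_diff_add)
    ultimately show ?thesis using pl uv unfolding a_def[symmetric] b_def[symmetric]
      by (simp add: algebra_simps)
  qed
  have "Cauchy s"
  proof (rule metric_CauchyI)
    fix e :: real assume e: "0 < e"
    obtain N :: nat where N: "2 * (4*d+2) / e^2 < real N" using reals_Archimedean2 by blast
    have "\<forall>i\<ge>N. \<forall>j\<ge>N. dist (s i) (s j) < e"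
    proof (intro allI impI)
      fix i j assume ij: "N \<le> i" "N \<le> j"
      have "1 / real (Suc i) \<le> 1 / real (Suc N)" "1 / real (Suc j) \<le> 1 / real (Suc N)"
        using ij by (auto simp: frac_le)
      then have "(4*d+2) * (1 / real (Suc i) + 1 / real (Suc j)) \<le> (4*d+2) * (2 / real (Suc N))"
        using d0 by (intro mult_left_mono) auto
      also have "\<dots> < e^2"
      proof -
        have "2 * (4*d+2) < e^2 * real (Suc N)" using N e
          by (simp add: field_simps) (smt (verit, best) mult_left_mono zero_le_power2)
        then show ?thesis by (simp add: field_simps)
      qed
      finally have "norm (s i - s j)^2 < e^2" using para[of i j] by linarith
      then show "dist (s i) (s j) < e" using e by (simp add: dist_norm power_less_imp_less_base)
    qed
    then show "\<exists>N. \<forall>m\<ge>N. \<forall>n\<ge>N. dist (s m) (s n) < e" by blast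
  qed
  then obtain m where lim: "s \<longlonglongrightarrow> m" using Cauchy_convergent_iff convergent_def by blast
  have mM: "m \<in> M" using closed_sequentially[OF cM sM' lim] .
  have "(\<lambda>n. norm (x - s n)) \<longlonglongrightarrow> norm (x - m)" by (intro tendsto_intros lim)
  moreover have "(\<lambda>n. d + 1 / real (Suc n)) \<longlonglongrightarrow> d + 0"
    by (intro tendsto_intros LIMSEQ_inverse_real_of_nat[unfolded inverse_eq_divide])
  ultimately have "norm (x - m) \<le> d + 0"
    by (rule LIMSEQ_le) (meson less_imp_le sd)
  then have mmin: "norm (x - m) \<le> norm (x - z)" if "z \<in> M" for z using dle[OF that] by simp
  have "inner (x - m) y = 0" if yM: "y \<in> M" for y
  proof (cases "y = 0")
    case True then show ?thesis by simp
  next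
    case False
    define a where "a = inner (x - m) y"
    define t where "t = a / inner y y"
    have yy: "0 < inner y y" using False by simp
    have "m + t *\<^sub>R y \<in> M" using sM mM yM by (simp add: subspace_add subspace_scale)
    then have "norm (x - m)^2 \<le> norm (x - (m + t *\<^sub>R y))^2"
      using mmin by (intro power_mono) auto
    also have "norm (x - (m + t *\<^sub>R y))^2 = norm (x - m)^2 - 2 * t * a + t^2 * inner y y"
    proof -
      have e: "x - (m + t *\<^sub>R y) = (x - m) - t *\<^sub>R y" by simp
      show ?thesis unfolding a_def e power2_norm_eq_inner
        by (simp add: inner_diff_left inner_diff_right inner_commute power2_eq_square algebra_simps)
    qed
    also have "t^2 * inner y y = t * a" unfolding t_def using yy by (simp add: power2_eq_square)
    finally have "0 \<le> - t * a" by (simp add: mult.commute)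
    then have "a^2 / inner y y \<le> 0" unfolding t_def by (simp add: power2_eq_square)
    then have "a^2 \<le> 0" using yy by (simp add: divide_le_0_iff)
    then show ?thesis unfolding a_def by simp
  qed
  then show ?thesis using mM by blast
qed


lemma proj_exists:
  fixes M :: "'a::{real_inner,complete_space} set"
  assumes cM: "closed M" and sM: "subspace M"
  shows "\<exists>P. is_rproj P M"
proof -
  define P where "P x = (SOME m. m \<in> M \<and> (\<forall>y\<in>M. inner (x - m) y = 0))" for x
  have Pm: "P x \<in> M \<and> (\<forall>y\<in>M. inner (x - P x) y = 0)" for x
    unfolding P_def by (rule someI_ex) (use orth_decomp[OF cM sM, of x] in blast)
  have uniq: "P x = m" if "m \<in> M" "\<forall>y\<in>M. inner (x - m) y = 0" for x m
  proof -
    have dM: "P x - m \<in> M" using Pm[of x] that sM by (simp add: subspace_diff)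
    have "inner (P x - m) (P x - m) = inner (x - m) (P x - m) - inner (x - P x) (P x - m)"
      by (simp add: inner_diff_left)
    also have "\<dots> = 0" using that Pm[of x] dM by simp
    finally show ?thesis by simp
  qed
  have lin: "linear P"
  proof (rule linearI)
    fix x y
    show "P (x + y) = P x + P y"
    proof (rule uniq)
      show "P x + P y \<in> M" using Pm sM by (simp add: subspace_add)
      show "\<forall>z\<in>M. inner (x + y - (P x + P y)) z = 0"
      proof
        fix z assume "z \<in> M"
        have "inner (x + y - (P x + P y)) z = inner (x - P x) z + inner (y - P y) z"
          by (simp add: inner_diff_left inner_add_left)
        then show "inner (x + y - (P x + P y)) z = 0" using Pm \<open>z \<in> M\<close> by simp
      qed
    qed
  next
    fix c x
    show "P (c *\<^sub>R x) = c *\<^sub>R P x"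
    proof (rule uniq)
      show "c *\<^sub>R P x \<in> M" using Pm sM by (simp add: subspace_scale)
      show "\<forall>z\<in>M. inner (c *\<^sub>R x - c *\<^sub>R P x) z = 0"
      proof
        fix z assume "z \<in> M"
        have "inner (c *\<^sub>R x - c *\<^sub>R P x) z = c * inner (x - P x) z"
          by (simp add: inner_diff_left algebra_simps)
        then show "inner (c *\<^sub>R x - c *\<^sub>R P x) z = 0" using Pm \<open>z \<in> M\<close> by simp
      qed
    qed
  qed
  have fix_: "P m = m" if "m \<in> M" for m using uniq[OF that] by simp
  have idem: "P (P x) = P x" for x using fix_ Pm by blast
  have sym1: "inner (P x) y = inner (P x) (P y)" for x y
  proof -
    have "inner (y - P y) (P x) = 0" using Pm by blast
    then show ?thesis by (simp add: inner_diff_left inner_diff_right inner_commute)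
  qed
  have sym: "inner (P x) y = inner x (P y)" for x y
  proof -
    have "inner (x - P x) (P y) = 0" using Pm by blast
    then have "inner x (P y) = inner (P x) (P y)" by (simp add: inner_diff_left)
    then show ?thesis using sym1 by simp
  qed
  have "range P = M"
  proof
    show "range P \<subseteq> M" using Pm by auto
    show "M \<subseteq> range P" using fix_ by (metis rangeI subsetI)
  qed
  then show ?thesis unfolding is_rproj_def using lin idem sym by blast
qed

lemma proj_unique:
  assumes "is_rproj P H" "is_rproj Q H"
  shows "P = Q"
proof
  fix x
  have P: "\<And>x. P (P x) = P x" "\<And>x y. inner (P x) y = inner x (P y)" "range P = H"
    and Q: "\<And>x. Q (Q x) = Q x" "\<And>x y. inner (Q x) y = inner x (Q y)" "range Q = H"
    using assms unfolding is_rproj_def by auto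
  have QP: "Q (P x) = P x" for x
  proof -
    have "P x \<in> range Q" using P(3) Q(3) by auto
    then show ?thesis using Q(1) by auto
  qed
  have PQ: "P (Q x) = Q x" for x
  proof -
    have "Q x \<in> range P" using P(3) Q(3) by auto
    then show ?thesis using P(1) by auto
  qed
  show "P x = Q x"
  proof (rule inner_eq_allI)
    fix y
    have "inner (P x) y = inner (Q (P x)) y" using QP by simp
    also have "\<dots> = inner x (P (Q y))" using P(2) Q(2) by simp
    also have "\<dots> = inner (Q x) y" using PQ Q(2) by simp
    finally show "inner (P x) y = inner (Q x) y" .
  qed
qed

lemma rproj_facts:
  fixes P :: "'a::real_inner \<Rightarrow> 'a"
  assumes "is_rproj P H"
  shows "linear P" "\<And>x. P (P x) = P x" "\<And>x y. inner (P x) y = inner x (P y)" "range P = H"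
    "\<And>x. x \<in> H \<Longrightarrow> P x = x" "\<And>x. P x \<in> H"
    "\<And>x. norm (P x) ^2 + norm (x - P x)^2 = norm x ^2"
    "\<And>x. norm (P x) \<le> norm x" "bounded_linear P"
proof -
  show lin: "linear P" and idem: "\<And>x. P (P x) = P x" and sym: "\<And>x y. inner (P x) y = inner x (P y)"
    and rng: "range P = H"
    using assms unfolding is_rproj_def by auto
  show "\<And>x. x \<in> H \<Longrightarrow> P x = x" using rng idem by auto
  show "\<And>x. P x \<in> H" using rng by auto
  have pyth: "norm (P x) ^2 + norm (x - P x)^2 = norm x ^2" for x
  proof -
    have o: "inner (P x) (x - P x) = 0"
      using sym[of x "P x"] idem[of x] by (simp add: inner_diff_right inner_commute)
    have "x = P x + (x - P x)" by simp
    then have "norm x ^2 = norm (P x + (x - P x))^2" by simp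
    also have "\<dots> = norm (P x) ^2 + norm (x - P x)^2"
      unfolding power2_norm_eq_inner using o
      by (simp add: inner_add_left inner_add_right inner_diff_left inner_diff_right inner_commute)
    finally show ?thesis by simp
  qed
  then show "\<And>x. norm (P x) ^2 + norm (x - P x)^2 = norm x ^2" .
  have nle: "norm (P x) \<le> norm x" for x
  proof -
    have "norm (P x) ^2 \<le> norm x ^2" using pyth[of x] by (smt (verit) zero_le_power2)
    then show ?thesis by (simp add: power2_le_iff_abs_le)
  qed
  then show "\<And>x. norm (P x) \<le> norm x" .
  show "bounded_linear P"
    using lin nle by (intro bounded_linear_intro[where K=1]) (auto simp: linear_add linear_scale)
qed

lemma rjoin_proj:
  fixes E1 E2 :: "'a::{real_inner,complete_space} \<Rightarrow> 'a"
  shows "is_rproj (rjoin E1 E2) (closure (span (range E1 \<union> range E2)))"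
proof -
  let ?M = "closure (span (range E1 \<union> range E2))"
  have "\<exists>P. is_rproj P ?M"
    by (rule proj_exists) (auto intro: subspace_closure_gen subspace_span)
  then have "\<exists>!P. is_rproj P ?M" using proj_unique by blast
  then show ?thesis unfolding rjoin_def by (rule theI')
qed


lemma ortho_closure_span:
  fixes z :: "'a::real_inner"
  assumes "\<And>a. a \<in> A \<Longrightarrow> inner z a = 0" "w \<in> closure (span A)"
  shows "inner z w = 0"
proof -
  let ?T = "{w. inner z w = 0}"
  have sT: "subspace ?T" unfolding subspace_def by (simp add: inner_add_right)
  have cT: "closed ?T" by (intro closed_Collect_eq continuous_intros)
  have "span A \<subseteq> ?T" using assms(1) by (intro span_minimal sT) auto
  then have "closure (span A) \<subseteq> ?T" using cT by (rule closure_minimal)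
  then show ?thesis using assms(2) by auto
qed

lemma key_bound:
  fixes P Q F :: "'a::{real_inner,complete_space} \<Rightarrow> 'a"
  assumes P: "is_rproj P H1" and Q: "is_rproj Q H2" and F: "F = rjoin P Q"
    and c0: "0 \<le> c" and cb: "\<And>x. norm (P (Q x)) \<le> c * norm x"
  shows "norm (P x + Q x - F x) \<le> c * norm x"
proof -
  note Pf = rproj_facts[OF P] and Qf = rproj_facts[OF Q]
  have Fp: "is_rproj F (closure (span (H1 \<union> H2)))" using rjoin_proj[of P Q] F Pf(4) Qf(4) by simp
  note Ff = rproj_facts[OF Fp]
  have FP: "F (P x) = P x" for x using Pf(6)[of x] by (intro Ff(5)) (auto intro: closure_subset[THEN subsetD] span_base)
  have FQ: "F (Q x) = Q x" for x using Qf(6)[of x] by (intro Ff(5)) (auto intro: closure_subset[THEN subsetD] span_base)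
  have PF: "P (F x) = P x" for x
    by (rule inner_eq_allI) (metis Pf(3) Ff(3) FP)
  have QF: "Q (F x) = Q x" for x
    by (rule inner_eq_allI) (metis Qf(3) Ff(3) FQ)
  have QPb: "norm (Q (P y)) \<le> c * norm y" for y
  proof -
    have "norm (Q (P y))^2 = inner (Q (P y)) (Q (P y))" by (simp add: power2_norm_eq_inner)
    also have "\<dots> = inner y (P (Q (Q (P y))))" by (metis Pf(3) Qf(3))
    also have "\<dots> \<le> norm y * norm (P (Q (Q (P y))))" by (rule norm_cauchy_schwarz)
    also have "\<dots> \<le> norm y * (c * norm (Q (P y)))" by (intro mult_left_mono cb) auto
    finally have *: "norm (Q (P y))^2 \<le> c * norm y * norm (Q (P y))" by (simp add: algebra_simps)
    show ?thesis
    proof (cases "norm (Q (P y)) = 0")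
      case True then show ?thesis using c0 by simp
    next
      case False
      then have "0 < norm (Q (P y))" by simp
      with * show ?thesis by (simp add: power2_eq_square)
    qed
  qed
  have Sb: "norm (P u + Q u - u) \<le> c * norm u" if a: "a \<in> H1" and b: "b \<in> H2" and u: "u = a + b" for a b u
  proof -
    define w where "w = P u"
    define v where "v = u - P u"
    have Su: "P u + Q u - u = Q w - (v - Q v)" unfolding w_def v_def
      using linear_diff[OF Qf(1)] by (simp add: algebra_simps)
    have orth: "inner (Q w) (v - Q v) = 0"
      by (simp add: Qf(3) inner_diff_right Qf(2))
    have n1: "norm (P u + Q u - u)^2 = norm (Q w)^2 + norm (v - Q v)^2"
      unfolding Su power2_norm_eq_inner using orth
      by (simp add: inner_diff_left inner_diff_right inner_commute)
    have "norm (Q w) \<le> c * norm (P u)" using QPb[of "P u"] Pf(2) unfolding w_def by simp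
    then have n2: "norm (Q w)^2 \<le> (c * norm (P u))^2" by (intro power_mono) auto
    have Pa: "P a = a" using a Pf(5) by simp
    have Qb: "Q b = b" using b Qf(5) by simp
    have v_eq: "v = b - P b" unfolding v_def u using linear_add[OF Pf(1)] Pa by simp
    have vQv: "v - Q v = - (P b - Q (P b))" unfolding v_eq using linear_diff[OF Qf(1)] Qb by simp
    define B where "B = norm b ^2"
    define p where "p = norm (P b)^2"
    define q where "q = norm (Q (P b))^2"
    have e1: "norm (v - Q v)^2 = p - q" unfolding vQv p_def q_def using Qf(7)[of "P b"] by (simp add: norm_minus_commute)
    have e2: "norm v ^2 = B - p" unfolding v_eq B_def p_def using Pf(7)[of b] by simp
    have "norm (P b) \<le> c * norm b" using cb[of b] Qb by simp
    then have pc: "p \<le> c^2 * B" unfolding p_def B_def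
      by (metis norm_ge_zero power_mono power_mult_distrib)
    have pB: "p \<le> B" unfolding p_def B_def using Pf(8)[of b] by (intro power_mono) auto
    have p0: "0 \<le> p" "0 \<le> q" "0 \<le> B" unfolding p_def q_def B_def by auto
    have "p = inner b (P b)" unfolding p_def power2_norm_eq_inner by (metis Pf(2) Pf(3))
    also have "\<dots> = inner b (Q (P b))" by (metis Qb Qf(3))
    also have "\<dots> \<le> norm b * norm (Q (P b))" by (rule norm_cauchy_schwarz)
    finally have "p^2 \<le> (norm b * norm (Q (P b)))^2" using p0 by (intro power_mono) auto
    then have pq: "p^2 \<le> B * q" unfolding B_def q_def by (simp add: power_mult_distrib)
    have "p - q \<le> c^2 * (B - p)"
    proof (cases "B = 0")
      case True then show ?thesis using pB p0 by simp
    next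
      case False
      then have Bp: "0 < B" using p0 by simp
      have "(p - q) * B \<le> p * (B - p)" using pq by (simp add: algebra_simps power2_eq_square)
      also have "\<dots> \<le> c^2 * B * (B - p)" using pc pB p0 by (intro mult_right_mono) auto
      finally have "(p - q) * B \<le> (c^2 * (B - p)) * B" by (simp add: algebra_simps)
      then show ?thesis using Bp by simp
    qed
    then have "norm (v - Q v)^2 \<le> c^2 * norm v^2" using e1 e2 by simp
    with n1 n2 have "norm (P u + Q u - u)^2 \<le> c^2 * (norm (P u)^2 + norm (u - P u)^2)"
      unfolding v_def by (simp add: power_mult_distrib algebra_simps)
    also have "\<dots> = (c * norm u)^2" using Pf(7)[of u] by (simp add: power_mult_distrib)
    finally show ?thesis using c0 by (simp add: power2_le_iff_abs_le)
  qed
  have span_eq: "span (H1 \<union> H2) = {a + b | a b. a \<in> H1 \<and> b \<in> H2}"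
  proof -
    have "subspace H1" "subspace H2"
      using Pf(4) Qf(4) linear_subspace_image[OF Pf(1) subspace_UNIV] linear_subspace_image[OF Qf(1) subspace_UNIV]
      by auto
    then show ?thesis by (simp add: span_Un span_eq_iff[THEN iffD2])
  qed
  let ?T = "{u. norm (P u + Q u - u) \<le> c * norm u}"
  have cT: "closed ?T"
    using linear_continuous_on[OF Pf(9)] linear_continuous_on[OF Qf(9)]
    by (intro closed_Collect_le continuous_intros) auto
  have "span (H1 \<union> H2) \<subseteq> ?T" unfolding span_eq using Sb by blast
  then have KT: "closure (span (H1 \<union> H2)) \<subseteq> ?T" using cT by (rule closure_minimal)
  have "F x \<in> closure (span (H1 \<union> H2))" using Ff(6) .
  then have "norm (P (F x) + Q (F x) - F x) \<le> c * norm (F x)" using KT by blast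
  then have "norm (P x + Q x - F x) \<le> c * norm (F x)" using PF QF by simp
  also have "\<dots> \<le> c * norm x" using c0 Ff(8) by (intro mult_left_mono) auto
  finally show ?thesis .
qed


theorem proposition5p4:
  fixes J :: "'a::{real_inner, complete_space} \<Rightarrow> 'a"
    and H1 H2 :: "'a set" and E1 E2 :: "'a \<Rightarrow> 'a"
  assumes J: "complex_structure J"
    and H1: "closed H1" "subspace H1" and H2: "closed H2" "subspace H2"
    and E1: "is_rproj E1 H1" and E2: "is_rproj E2 H2"
  shows "(linear (Xop E1 E2) \<and>
          (\<forall>x y. inner (Xop E1 E2 x) y = inner x (Xop E1 E2 y)) \<and>
          (\<forall>x. norm (Xop E1 E2 x) \<le> norm x) \<and>
          onorm (Xop E1 E2) = onorm (E1 \<circ> E2))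
       \<and> (Xop E1 E2 = (\<lambda>x. 0) \<longleftrightarrow> rle E1 (rperp E2))
       \<and> (standard J H1 \<and> rle E1 (sprime J E2) \<longrightarrow>
            (Xop E1 E2 = (\<lambda>x. 0) \<longleftrightarrow> E2 = (\<lambda>x. 0)))"
proof -
  define P where "P = E1"
  define Q where "Q = E2"
  define F where "F = rjoin E1 E2"
  have P: "is_rproj P H1" and Q: "is_rproj Q H2" using E1 E2 P_def Q_def by simp_all
  note Pf = rproj_facts[OF P] and Qf = rproj_facts[OF Q]
  have Fp: "is_rproj F (closure (span (H1 \<union> H2)))"
    using rjoin_proj[of E1 E2] F_def E1 E2 unfolding is_rproj_def by simp
  note Ff = rproj_facts[OF Fp]
  have FP: "F (P x) = P x" for x using Pf(6)[of x] by (intro Ff(5)) (auto intro: closure_subset[THEN subsetD] span_base)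
  have FQ: "F (Q x) = Q x" for x using Qf(6)[of x] by (intro Ff(5)) (auto intro: closure_subset[THEN subsetD] span_base)
  have X: "Xop E1 E2 = (\<lambda>x. P x + Q x - F x)" unfolding Xop_def P_def Q_def F_def by simp
  have bound: "norm (P x + Q x - F x) \<le> c * norm x"
    if "0 \<le> c" "\<And>x. norm (P (Q x)) \<le> c * norm x" for c x
    using key_bound[OF P Q _ that] F_def P_def Q_def by simp
  have linX: "linear (Xop E1 E2)" unfolding X
    by (rule linearI) (simp_all add: linear_add[OF Pf(1)] linear_add[OF Qf(1)] linear_add[OF Ff(1)]
        linear_scale[OF Pf(1)] linear_scale[OF Qf(1)] linear_scale[OF Ff(1)] algebra_simps)
  have symX: "\<forall>x y. inner (Xop E1 E2 x) y = inner x (Xop E1 E2 y)" unfolding X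
    by (simp add: inner_add_left inner_diff_left inner_add_right inner_diff_right Pf(3) Qf(3) Ff(3))
  have contr: "\<forall>x. norm (Xop E1 E2 x) \<le> norm x" unfolding X
    using bound[of 1] Pf(8) Qf(8) by (metis mult_1 zero_le_one order_trans)
  have blX: "bounded_linear (Xop E1 E2)"
    using linX contr by (intro bounded_linear_intro[where K=1]) (auto simp: linear_add linear_scale)
  have blPQ: "bounded_linear (E1 \<circ> E2)" using Pf(9) Qf(9) P_def Q_def
    by (simp add: bounded_linear_compose comp_def)
  have on1: "onorm (Xop E1 E2) \<le> onorm (E1 \<circ> E2)"
  proof (rule onorm_bound)
    show "0 \<le> onorm (E1 \<circ> E2)" by (rule onorm_pos_le[OF blPQ])
    show "norm (Xop E1 E2 x) \<le> onorm (E1 \<circ> E2) * norm x" for x unfolding X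
      using bound onorm_pos_le[OF blPQ] onorm[OF blPQ] P_def Q_def by simp
  qed
  have PXQ: "P (Xop E1 E2 (Q x)) = P (Q x)" for x unfolding X
    using FQ Pf(2) Qf(2) by (simp add: linear_add[OF Pf(1)] linear_diff[OF Pf(1)])
  have on2: "onorm (E1 \<circ> E2) \<le> onorm (Xop E1 E2)"
  proof (rule onorm_bound)
    show "0 \<le> onorm (Xop E1 E2)" by (rule onorm_pos_le[OF blX])
    show "norm ((E1 \<circ> E2) x) \<le> onorm (Xop E1 E2) * norm x" for x
    proof -
      have "norm ((E1 \<circ> E2) x) = norm (P (Xop E1 E2 (Q x)))" using PXQ P_def Q_def by simp
      also have "\<dots> \<le> norm (Xop E1 E2 (Q x))" by (rule Pf(8))
      also have "\<dots> \<le> onorm (Xop E1 E2) * norm (Q x)" by (rule onorm[OF blX])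
      also have "\<dots> \<le> onorm (Xop E1 E2) * norm x"
        by (intro mult_left_mono Qf(8) onorm_pos_le[OF blX])
      finally show "norm ((E1 \<circ> E2) x) \<le> onorm (Xop E1 E2) * norm x" .
    qed
  qed
  have partA: "linear (Xop E1 E2) \<and>
          (\<forall>x y. inner (Xop E1 E2 x) y = inner x (Xop E1 E2 y)) \<and>
          (\<forall>x. norm (Xop E1 E2 x) \<le> norm x) \<and>
          onorm (Xop E1 E2) = onorm (E1 \<circ> E2)"
    using linX symX contr on1 on2 by simp
  have rle_iff: "rle E1 (rperp E2) \<longleftrightarrow> (\<forall>x. Q (P x) = 0)"
  proof
    assume "rle E1 (rperp E2)"
    then have "P x \<in> range (\<lambda>x. x - Q x)" for x unfolding rle_def rperp_def P_def Q_def by auto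
    then have r: "P x \<in> range (\<lambda>x. x - Q x)" for x .
    show "\<forall>x. Q (P x) = 0"
    proof
      fix x
      obtain y where "P x = y - Q y" using r[of x] by auto
      then show "Q (P x) = 0" using Qf(2) by (simp add: linear_diff[OF Qf(1)])
    qed
  next
    assume h: "\<forall>x. Q (P x) = 0"
    have "P x = P x - Q (P x)" for x using h by simp
    then show "rle E1 (rperp E2)" unfolding rle_def rperp_def P_def Q_def
      by (metis (no_types, lifting) rangeI image_subsetI)
  qed
  have b1: "Xop E1 E2 = (\<lambda>x. 0)" if h: "\<forall>x. Q (P x) = 0"
  proof
    fix x
    have PQ: "P (Q y) = 0" for y
      by (rule inner_eq_allI) (simp add: Pf(3) Qf(3) h)
    define z where "z = F x - P x - Q x"
    have zK: "z \<in> closure (span (H1 \<union> H2))"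
    proof -
      have s: "subspace (closure (span (H1 \<union> H2)))" by (intro subspace_closure_gen subspace_span)
      have "P x \<in> closure (span (H1 \<union> H2))" "Q x \<in> closure (span (H1 \<union> H2))"
        using Pf(6) Qf(6) by (auto intro: closure_subset[THEN subsetD] span_base)
      then show ?thesis unfolding z_def using Ff(6) s by (simp add: subspace_diff)
    qed
    have "inner z a = 0" if "a \<in> H1 \<union> H2" for a
      using that
    proof
      assume "a \<in> H1"
      then have a: "a = P a" using Pf(5) by simp
      show "inner z a = 0" unfolding z_def
        by (subst a) (simp add: inner_diff_left Ff(3) Pf(3) Qf(3) FP h Pf(2))
    next
      assume "a \<in> H2"
      then have a: "a = Q a" using Qf(5) by simp
      show "inner z a = 0" unfolding z_def
        by (subst a) (simp add: inner_diff_left Ff(3) Pf(3) Qf(3) FQ PQ Qf(2))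
    qed
    then have "inner z z = 0" using ortho_closure_span zK by blast
    then have "z = 0" by simp
    then show "Xop E1 E2 x = 0" unfolding X z_def by (simp add: algebra_simps)
  qed
  have b2: "\<forall>x. Q (P x) = 0" if h: "Xop E1 E2 = (\<lambda>x. 0)"
  proof
    fix x
    have FE: "F y = P y + Q y" for y using fun_cong[OF h, of y] unfolding X by (simp add: algebra_simps)
    have i: "P (Q y) + Q (P y) = 0" for y
    proof -
      have "F (F y) = F y" by (rule Ff(2))
      then have "P (P y + Q y) + Q (P y + Q y) = P y + Q y" unfolding FE .
      then show ?thesis
        by (simp add: linear_add[OF Pf(1)] linear_add[OF Qf(1)] Pf(2) Qf(2) algebra_simps)
    qed
    have "P (P (Q x) + Q (P x)) = 0" using i[of x] by (simp add: linear_0[OF Pf(1)])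
    then have i2: "P (Q x) + P (Q (P x)) = 0" by (simp add: linear_add[OF Pf(1)] Pf(2))
    have i3: "P (Q (P x)) + Q (P x) = 0" using i[of "P x"] Pf(2) by simp
    from i[of x] i2 i3 have "2 *\<^sub>R Q (P x) = 0"
      by (metis add.commute add_left_cancel scaleR_2)
    then show "Q (P x) = 0" by simp
  qed
  have partB: "Xop E1 E2 = (\<lambda>x. 0) \<longleftrightarrow> rle E1 (rperp E2)"
    using b1 b2 rle_iff by blast
  have partC: "Xop E1 E2 = (\<lambda>x. 0) \<longleftrightarrow> E2 = (\<lambda>x. 0)"
    if st: "standard J H1" and sp: "rle E1 (sprime J E2)"
  proof
    assume "E2 = (\<lambda>x. 0)"
    then show "Xop E1 E2 = (\<lambda>x. 0)" using b1 Q_def by simp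
  next
    assume "Xop E1 E2 = (\<lambda>x. 0)"
    then have h: "\<forall>x. Q (P x) = 0" by (rule b2)
    have Jl: "linear J" and JJ: "\<And>x. J (J x) = - x" and Ji: "\<And>x y. inner (J x) (J y) = inner x y"
      using J unfolding complex_structure_def by auto
    show "E2 = (\<lambda>x. 0)"
    proof
      fix x
      define h0 where "h0 = Q x"
      have hQ: "Q h0 = h0" unfolding h0_def by (rule Qf(2))
      have o1: "inner h0 a = 0" if "a \<in> H1" for a
      proof -
        have "a = P a" using that Pf(5) by simp
        then have "inner h0 a = inner h0 (P a)" by simp
        also have "\<dots> = inner (Q h0) (P a)" using hQ by simp
        also have "\<dots> = 0" by (simp add: Qf(3) h)
        finally show ?thesis .
      qed
      have o2: "inner h0 (J a) = 0" if "a \<in> H1" for a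
      proof -
        have "a \<in> range (sprime J E2)" using sp that Pf(4) P_def unfolding rle_def by auto
        then obtain y where a: "a = y + J (Q (J y))" unfolding sprime_def Q_def by auto
        have Jy: "inner (J y) h0 = - inner y (J h0)" using Ji[of "J y" h0] JJ[of y] by simp
        have "inner a (J h0) = inner y (J h0) + inner (Q (J y)) h0"
          unfolding a by (simp add: inner_add_left Ji)
        also have "inner (Q (J y)) h0 = inner (J y) h0" using Qf(3)[of "J y" h0] hQ by simp
        finally have "inner a (J h0) = 0" using Jy by simp
        moreover have "inner h0 (J a) = - inner a (J h0)"
          using Ji[of h0 "J a"] JJ[of a] by (simp add: inner_commute)
        ultimately show ?thesis by simp
      qed
      let ?T = "{w. inner h0 w = 0}"
      have cT: "closed ?T" by (intro closed_Collect_eq continuous_intros)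
      have "{a + b | a b. a \<in> H1 \<and> b \<in> J ` H1} \<subseteq> ?T"
        using o1 o2 by (auto simp: inner_add_right)
      then have "closure {a + b | a b. a \<in> H1 \<and> b \<in> J ` H1} \<subseteq> ?T"
        using cT by (rule closure_minimal)
      then have "h0 \<in> ?T" using st unfolding standard_def by blast
      then have "h0 = 0" by simp
      then show "E2 x = 0" unfolding h0_def Q_def .
    qed
  qed
  show ?thesis using partA partB partC by blast
qed

end
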